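(* Let $\mathcal{P}$ be a profile of unrooted phylogenetic trees whose display graph $G(\mathcal{P})$ is connected, and let $F\subseteq E(G(\mathcal{P}))$. Then $F$ is a legal minimal separator of $\mathrm{LG}(\mathcal{P})$ if and only if $F$ is a nice minimal cut of $G(\mathcal{P})$.
   Context: A phylogenetic tree $T$ is an unrooted tree whose leaves are bijectively labeled by a label set $\mathcal{L}(T)$ (leaves identified with labels; internal vertices have degree at least three). A profile $\mathcal{P}=\{T_1,\dots,T_k\}$ is a finite collection of phylogenetic trees; the internal vertices of distinct trees are disjoint, while leaves with the same label are the same vertex. The display graph $G(\mathcal{P})$ has vertex set $\bigcup_i V(T_i)$ and edge set $\bigcup_i E(T_i)$. For a vertex $u$ of an input tree, $\mathrm{Inc}(u)$ is the set of edges of $G(\mathcal{P})$ incident with $u$. $\mathrm{LG}(\mathcal{P})$ is the line graph of $G(\mathcal{P})$ (vertices are the edges of $G(\mathcal{P})$, adjacent iff they share an endpoint). In a graph $G$, for nonadjacent vertices $a,b$, an $a$-$b$ separator is $U\subset V(G)$ with $a,b$ in different components of $G-U$; it is minimal if no proper subset is an $a$-$b$ separator; $U$ is a minimal separator if it is a minimal $a$-$b$ separator for some nonadjacent $a,b$. A minimal separator $F$ of $\mathrm{LG}(\mathcal{P})$ is legal if for every $T\in\mathcal{P}$ all edges of $T$ lying in $F$ share a common endpoint. A cut of a connected graph $G$ is $F\subseteq E(G)$ with $G-F$ (same vertices, edges of $F$ removed) disconnected; minimal if no proper subset is a cut. A cut $F$ of $G(\mathcal{P})$ is legal if for every $T\in\mathcal{P}$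 there is $u\in V(T)$ with $F\cap E(T)\subseteq\mathrm{Inc}(u)$; it is nice if it is legal and every connected component of $G(\mathcal{P})-F$ contains at least one edge. *)

theory Defs
  imports Main
begin

type_synonym 'a graph = "'a set \<times> 'a set set"

definition gverts :: "'a graph \<Rightarrow> 'a set" where "gverts G = fst G"
definition gedges :: "'a graph \<Rightarrow> 'a set set" where "gedges G = snd G"

definition wf_graph :: "'a graph \<Rightarrow> bool" where
  "wf_graph G \<longleftrightarrow> finite (gverts G) \<and> (\<forall>e\<in>gedges G. card e = 2 \<and> e \<subseteq> gverts G)"

definition reach :: "'a set \<Rightarrow> 'a set set \<Rightarrow> 'a \<Rightarrow> 'a \<Rightarrow> bool" where
  "reach V E x y \<longleftrightarrow> x \<in> V \<and> (\<lambda>u w. u \<in> V \<and> w \<in> V \<and> {u, w} \<in> E)\<^sup>*\<^sup>* x y"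

definition connected_graph :: "'a graph \<Rightarrow> bool" where
  "connected_graph G \<longleftrightarrow> gverts G \<noteq> {} \<and>
     (\<forall>x\<in>gverts G. \<forall>y\<in>gverts G. reach (gverts G) (gedges G) x y)"

definition is_tree :: "'a graph \<Rightarrow> bool" where
  "is_tree T \<longleftrightarrow> wf_graph T \<and> connected_graph T \<and>
     (\<forall>e\<in>gedges T. \<not> connected_graph (gverts T, gedges T - {e}))"

definition degree :: "'a graph \<Rightarrow> 'a \<Rightarrow> nat" where
  "degree G v = card {e \<in> gedges G. v \<in> e}"

definition leaves :: "'a graph \<Rightarrow> 'a set" where
  "leaves T = {v \<in> gverts T. degree T v \<le> 1}"

definition phylo_tree :: "'a graph \<Rightarrow> bool" where
  "phylo_tree T \<longleftrightarrow> is_tree T \<and> (\<forall>v \<in> gverts T - leaves T. degree T v \<ge> 3)"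

text \<open>A profile: finite collection of phylogenetic trees; vertices shared by distinct trees
  must be leaves (labels) of both, i.e. internal vertices are disjoint.\<close>
definition profile :: "'a graph set \<Rightarrow> bool" where
  "profile P \<longleftrightarrow> finite P \<and> (\<forall>T\<in>P. phylo_tree T) \<and>
     (\<forall>T\<in>P. \<forall>T'\<in>P. T \<noteq> T' \<longrightarrow> gverts T \<inter> gverts T' \<subseteq> leaves T \<inter> leaves T')"

definition display_graph :: "'a graph set \<Rightarrow> 'a graph" where
  "display_graph P = (\<Union>T\<in>P. gverts T, \<Union>T\<in>P. gedges T)"

definition Inc :: "'a graph set \<Rightarrow> 'a \<Rightarrow> 'a set set" where
  "Inc P u = {e \<in> gedges (display_graph P). u \<in> e}"

definition line_graph :: "'a graph \<Rightarrow> 'a set graph" where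
  "line_graph G = (gedges G, {{e, f} | e f. e \<in> gedges G \<and> f \<in> gedges G \<and> e \<noteq> f \<and> e \<inter> f \<noteq> {}})"

definition delete_verts :: "'a graph \<Rightarrow> 'a set \<Rightarrow> 'a graph" where
  "delete_verts G U = (gverts G - U, {e \<in> gedges G. e \<inter> U = {}})"

definition is_ab_separator :: "'a graph \<Rightarrow> 'a \<Rightarrow> 'a \<Rightarrow> 'a set \<Rightarrow> bool" where
  "is_ab_separator G a b U \<longleftrightarrow> U \<subseteq> gverts G \<and> a \<in> gverts G - U \<and> b \<in> gverts G - U \<and>
     \<not> reach (gverts (delete_verts G U)) (gedges (delete_verts G U)) a b"

definition is_min_ab_separator :: "'a graph \<Rightarrow> 'a \<Rightarrow> 'a \<Rightarrow> 'a set \<Rightarrow> bool" where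
  "is_min_ab_separator G a b U \<longleftrightarrow> is_ab_separator G a b U \<and>
     (\<forall>U'. U' \<subset> U \<longrightarrow> \<not> is_ab_separator G a b U')"

definition is_min_separator :: "'a graph \<Rightarrow> 'a set \<Rightarrow> bool" where
  "is_min_separator G U \<longleftrightarrow> (\<exists>a b. a \<in> gverts G \<and> b \<in> gverts G \<and> a \<noteq> b \<and>
     {a, b} \<notin> gedges G \<and> is_min_ab_separator G a b U)"

definition legal_min_separator :: "'a graph set \<Rightarrow> 'a set set \<Rightarrow> bool" where
  "legal_min_separator P F \<longleftrightarrow> is_min_separator (line_graph (display_graph P)) F \<and>
     (\<forall>T\<in>P. \<exists>u. \<forall>e \<in> F \<inter> gedges T. u \<in> e)"

definition is_cut :: "'a graph \<Rightarrow> 'a set set \<Rightarrow> bool" where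
  "is_cut G F \<longleftrightarrow> F \<subseteq> gedges G \<and> \<not> connected_graph (gverts G, gedges G - F)"

definition is_min_cut :: "'a graph \<Rightarrow> 'a set set \<Rightarrow> bool" where
  "is_min_cut G F \<longleftrightarrow> is_cut G F \<and> (\<forall>F'. F' \<subset> F \<longrightarrow> \<not> is_cut G F')"

definition legal_cut :: "'a graph set \<Rightarrow> 'a set set \<Rightarrow> bool" where
  "legal_cut P F \<longleftrightarrow> is_cut (display_graph P) F \<and>
     (\<forall>T\<in>P. \<exists>u\<in>gverts T. F \<inter> gedges T \<subseteq> Inc P u)"

text \<open>Nice cut: legal, and every connected component of G - F contains an edge.\<close>
definition nice_cut :: "'a graph set \<Rightarrow> 'a set set \<Rightarrow> bool" where
  "nice_cut P F \<longleftrightarrow> legal_cut P F \<and>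
     (let G = display_graph P in
      \<forall>v\<in>gverts G. \<exists>e\<in>gedges G - F. \<forall>x\<in>e. reach (gverts G) (gedges G - F) v x)"

definition nice_min_cut :: "'a graph set \<Rightarrow> 'a set set \<Rightarrow> bool" where
  "nice_min_cut P F \<longleftrightarrow> nice_cut P F \<and> is_min_cut (display_graph P) F"

end

theory Submission
  imports Defs
begin

lemma reach_refl: "x \<in> V \<Longrightarrow> reach V E x x"
  by (simp add: reach_def)

lemma reach_in: assumes "reach V E x y" shows "x \<in> V \<and> y \<in> V"
proof -
  have "x \<in> V" and r: "(\<lambda>u w. u \<in> V \<and> w \<in> V \<and> {u, w} \<in> E)\<^sup>*\<^sup>* x y" using assms by (auto simp: reach_def)
  from r show ?thesis using \<open>x \<in> V\<close> by (induction rule: rtranclp_induct) auto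
qed

lemma reach_trans: "reach V E x y \<Longrightarrow> reach V E y z \<Longrightarrow> reach V E x z"
  by (auto simp: reach_def)

lemma reach_step: "u \<in> V \<Longrightarrow> w \<in> V \<Longrightarrow> {u, w} \<in> E \<Longrightarrow> reach V E u w"
  by (auto simp: reach_def)

lemma reach_sym: assumes "reach V E x y" shows "reach V E y x"
proof -
  have "x \<in> V" and r: "(\<lambda>u w. u \<in> V \<and> w \<in> V \<and> {u, w} \<in> E)\<^sup>*\<^sup>* x y" using assms by (auto simp: reach_def)
  from r show ?thesis using \<open>x \<in> V\<close>
  proof (induction rule: rtranclp_induct)
    case base then show ?case by (simp add: reach_refl)
  next
    case (step y z)
    then have "reach V E z y" by (intro reach_step) (auto simp: insert_commute)
    then show ?case using step reach_trans by metis
  qed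
qed

lemma reach_mono: assumes "E1 \<subseteq> E2" "reach V E1 x y" shows "reach V E2 x y"
proof -
  have "x \<in> V" and r: "(\<lambda>u w. u \<in> V \<and> w \<in> V \<and> {u, w} \<in> E1)\<^sup>*\<^sup>* x y" using assms by (auto simp: reach_def)
  from r show ?thesis using \<open>x \<in> V\<close>
  proof (induction rule: rtranclp_induct)
    case base then show ?case by (simp add: reach_refl)
  next
    case (step y z)
    then have "reach V E2 y z" using assms(1) by (intro reach_step) auto
    then show ?case using step reach_trans by metis
  qed
qed

lemma card2_eq: "card e = 2 \<Longrightarrow> x \<in> e \<Longrightarrow> y \<in> e \<Longrightarrow> x \<noteq> y \<Longrightarrow> e = {x, y}"
  by (auto simp: card_2_iff)

lemma reach_edge: assumes "e \<in> E" "e \<subseteq> V" "card e = 2" "x \<in> e" "y \<in> e" shows "reach V E x y"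
proof (cases "x = y")
  case True then show ?thesis using assms by (auto intro: reach_refl)
next
  case False
  note assms
  have "e = {x, y}" using assms False by (intro card2_eq) auto
  then show ?thesis using \<open>e \<in> E\<close> \<open>e \<subseteq> V\<close> by (intro reach_step) auto
qed

lemma lg_step:
  assumes "e \<in> gedges G - U" "f \<in> gedges G - U"
  shows "{e, f} \<in> gedges (delete_verts (line_graph G) U) \<longleftrightarrow> e \<noteq> f \<and> e \<inter> f \<noteq> {}"
  using assms by (auto simp: delete_verts_def line_graph_def gedges_def doubleton_eq_iff)

lemma lg_verts: "gverts (delete_verts (line_graph G) U) = gedges G - U"
  by (simp add: delete_verts_def line_graph_def gedges_def gverts_def)

lemma lg_reach_imp:
  assumes wf: "\<And>e. e \<in> gedges G \<Longrightarrow> card e = 2 \<and> e \<subseteq> gverts G"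
    and r: "reach (gverts (delete_verts (line_graph G) U)) (gedges (delete_verts (line_graph G) U)) e f"
  shows "\<forall>x\<in>e. \<forall>y\<in>f. reach (gverts G) (gedges G - U) x y"
proof -
  have e: "e \<in> gedges G - U" and rr: "(\<lambda>u w. u \<in> gedges G - U \<and> w \<in> gedges G - U \<and> {u, w} \<in> gedges (delete_verts (line_graph G) U))\<^sup>*\<^sup>* e f"
    using r by (auto simp: reach_def lg_verts)
  from rr show ?thesis
  proof (induction rule: rtranclp_induct)
    case base
    then show ?case using e wf[of e] by (auto intro: reach_edge)
  next
    case (step g h)
    then have "h \<in> gedges G - U" "g \<inter> h \<noteq> {}" using lg_step[of g G U h] by auto
    then obtain z where z: "z \<in> g" "z \<in> h" by blast
    show ?case
    proof (intro ballI)
      fix x y assume "x \<in> e" "y \<in> h"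
      have "reach (gverts G) (gedges G - U) x z" using step.IH \<open>x \<in> e\<close> z by auto
      moreover have "reach (gverts G) (gedges G - U) z y"
        using \<open>h \<in> gedges G - U\<close> wf[of h] z \<open>y \<in> h\<close> by (auto intro: reach_edge)
      ultimately show "reach (gverts G) (gedges G - U) x y" by (rule reach_trans)
    qed
  qed
qed

lemma lg_reach_rev:
  assumes wf: "\<And>e. e \<in> gedges G \<Longrightarrow> card e = 2 \<and> e \<subseteq> gverts G"
    and r: "reach (gverts G) (gedges G - U) x y"
  shows "\<forall>e\<in>gedges G - U. \<forall>f\<in>gedges G - U. x \<in> e \<longrightarrow> y \<in> f \<longrightarrow>
     reach (gverts (delete_verts (line_graph G) U)) (gedges (delete_verts (line_graph G) U)) e f"
proof -
  let ?LV = "gverts (delete_verts (line_graph G) U)"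
  let ?LE = "gedges (delete_verts (line_graph G) U)"
  have adj: "reach ?LV ?LE e f" if "e \<in> gedges G - U" "f \<in> gedges G - U" "e \<inter> f \<noteq> {}" for e f
  proof (cases "e = f")
    case True then show ?thesis using that by (simp add: reach_refl lg_verts)
  next
    case False then show ?thesis using that lg_step[of e G U f] by (intro reach_step) (auto simp: lg_verts)
  qed
  have rr: "(\<lambda>u w. u \<in> gverts G \<and> w \<in> gverts G \<and> {u, w} \<in> gedges G - U)\<^sup>*\<^sup>* x y"
    using r by (auto simp: reach_def)
  from rr show ?thesis
  proof (induction rule: rtranclp_induct)
    case base
    then show ?case using adj by blast
  next
    case (step y z)
    show ?case
    proof (intro ballI impI)
      fix e f assume ef: "e \<in> gedges G - U" "f \<in> gedges G - U" "x \<in> e" "z \<in> f"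
      have yz: "{y, z} \<in> gedges G - U" using step by auto
      have "reach ?LV ?LE e {y, z}" using step.IH ef yz by auto
      moreover have "reach ?LV ?LE {y, z} f" using adj[OF yz ef(2)] ef by auto
      ultimately show "reach ?LV ?LE e f" by (rule reach_trans)
    qed
  qed
qed

lemma reach_add_edge:
  assumes r: "reach V (E - (F - {f})) x y"
  shows "reach V (E - F) x y \<or> (\<exists>u\<in>f. \<exists>v\<in>f. reach V (E - F) x u \<and> reach V (E - F) v y)"
proof -
  have x: "x \<in> V" and rr: "(\<lambda>u w. u \<in> V \<and> w \<in> V \<and> {u, w} \<in> E - (F - {f}))\<^sup>*\<^sup>* x y"
    using r by (auto simp: reach_def)
  from rr show ?thesis
  proof (induction rule: rtranclp_induct)
    case base then show ?case using x by (simp add: reach_refl)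
  next
    case (step y z)
    show ?case
    proof (cases "{y, z} \<in> E - F")
      case True
      then have yz: "reach V (E - F) y z" using step by (intro reach_step) auto
      from step.IH show ?thesis
        using yz reach_trans by metis
    next
      case False
      then have "{y, z} = f" using step by auto
      then have "y \<in> f" "z \<in> f" by auto
      have zz: "reach V (E - F) z z" using step by (auto intro: reach_refl)
      from step.IH show ?thesis
      proof
        assume "reach V (E - F) x y" then show ?thesis using \<open>y \<in> f\<close> \<open>z \<in> f\<close> zz by blast
      next
        assume "\<exists>u\<in>f. \<exists>v\<in>f. reach V (E - F) x u \<and> reach V (E - F) v y"
        then show ?thesis using \<open>z \<in> f\<close> zz by blast
      qed
    qed
  qed
qed

lemma lg_gverts: "gverts (line_graph G) = gedges G"
  by (simp add: line_graph_def gverts_def)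

lemma conn_pair: "connected_graph (V, E) \<longleftrightarrow> V \<noteq> {} \<and> (\<forall>x\<in>V. \<forall>y\<in>V. reach V E x y)"
  by (simp add: connected_graph_def gverts_def gedges_def)

lemma main_graph:
  assumes wf: "\<And>e. e \<in> gedges G \<Longrightarrow> card e = 2 \<and> e \<subseteq> gverts G"
    and conn: "connected_graph G" and FE: "F \<subseteq> gedges G"
  shows "is_min_separator (line_graph G) F \<longleftrightarrow>
    is_min_cut G F \<and> (\<forall>v\<in>gverts G. \<exists>e\<in>gedges G - F. \<forall>x\<in>e. reach (gverts G) (gedges G - F) v x)"
    (is "?L \<longleftrightarrow> ?R")
proof
  let ?V = "gverts G" and ?E = "gedges G"
  let ?LG = "line_graph G"
  have ne: "\<exists>x. x \<in> e" if "e \<in> ?E" for e using wf[OF that] by (auto simp: card_2_iff)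
  assume ?L
  then obtain a b where ab: "a \<in> ?E" "b \<in> ?E" "is_min_ab_separator ?LG a b F"
    by (auto simp: is_min_separator_def lg_gverts)
  then have sep: "a \<in> ?E - F" "b \<in> ?E - F"
      "\<not> reach (gverts (delete_verts ?LG F)) (gedges (delete_verts ?LG F)) a b"
    and minl: "\<And>U'. U' \<subset> F \<Longrightarrow> \<not> is_ab_separator ?LG a b U'"
    by (auto simp: is_min_ab_separator_def is_ab_separator_def lg_gverts)
  obtain xa yb where xa: "xa \<in> a" and yb: "yb \<in> b" using ne ab by blast
  have nxy: "\<not> reach ?V (?E - F) xa yb"
    using lg_reach_rev[OF wf, of F xa yb] sep xa yb by blast
  have hF: "\<exists>u\<in>f. \<exists>v\<in>f. reach ?V (?E - F) xa u \<and> reach ?V (?E - F) v yb" if "f \<in> F" for f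
  proof -
    have "F - {f} \<subset> F" using that by auto
    then have "\<not> is_ab_separator ?LG a b (F - {f})" by (rule minl)
    then have "reach (gverts (delete_verts ?LG (F - {f}))) (gedges (delete_verts ?LG (F - {f}))) a b"
      using sep FE by (auto simp: is_ab_separator_def lg_gverts)
    then have r1: "reach ?V (?E - (F - {f})) xa yb" using lg_reach_imp[OF wf] xa yb by blast
    show ?thesis using reach_add_edge[OF r1] nxy by blast
  qed
  have C: "reach ?V (?E - F) xa w \<or> reach ?V (?E - F) yb w" if "w \<in> ?V" for w
  proof -
    have "xa \<in> ?V" using wf[of a] ab(1) xa by blast
    then have "reach ?V ?E xa w" using conn that by (auto simp: connected_graph_def)
    then have rr: "(\<lambda>u w. u \<in> ?V \<and> w \<in> ?V \<and> {u, w} \<in> ?E)\<^sup>*\<^sup>* xa w" by (auto simp: reach_def)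
    from rr show ?thesis
    proof (induction rule: rtranclp_induct)
      case base then show ?case using \<open>xa \<in> ?V\<close> by (simp add: reach_refl)
    next
      case (step y z)
      show ?case
      proof (cases "{y, z} \<in> F")
        case False
        then have yz: "reach ?V (?E - F) y z" using step by (intro reach_step) auto
        from step.IH show ?thesis
          using yz reach_trans by metis
      next
        case True
        then obtain u v where uv: "u \<in> {y, z}" "v \<in> {y, z}" "reach ?V (?E - F) xa u" "reach ?V (?E - F) v yb"
          using hF by blast
        have "u \<noteq> v" using uv nxy reach_trans by metis
        then have "z = u \<or> z = v" using uv by auto
        then show ?thesis using uv reach_sym by metis
      qed
    qed
  qed
  have cut: "is_cut G F"
    unfolding is_cut_def conn_pair using FE nxy wf ab xa yb by blast
  have mincut: "is_min_cut G F"
    unfolding is_min_cut_def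
  proof (intro conjI allI impI cut)
    fix F' assume "F' \<subset> F"
    then obtain f where f: "f \<in> F" "f \<notin> F'" by blast
    have mono: "reach ?V (?E - F') x y" if "reach ?V (?E - F) x y" for x y
      using reach_mono[OF _ that, of "?E - F'"] \<open>F' \<subset> F\<close> by blast
    obtain u v where uv: "u \<in> f" "v \<in> f" "reach ?V (?E - F) xa u" "reach ?V (?E - F) v yb"
      using hF f by blast
    have "f \<in> ?E - F'" using f FE by auto
    then have "reach ?V (?E - F') u v" using wf[of f] uv by (auto intro: reach_edge)
    then have xy': "reach ?V (?E - F') xa yb" using mono uv reach_trans by metis
    have all: "reach ?V (?E - F') xa w" if "w \<in> ?V" for w
      using C[OF that] mono xy' reach_trans by metis
    have "connected_graph (?V, ?E - F')"
      unfolding conn_pair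
      using all reach_sym reach_trans conn by (metis connected_graph_def)
    then show "\<not> is_cut G F'" by (simp add: is_cut_def)
  qed
  have nice: "\<forall>v\<in>?V. \<exists>e\<in>?E - F. \<forall>x\<in>e. reach ?V (?E - F) v x"
  proof
    fix v assume "v \<in> ?V"
    have ea: "reach ?V (?E - F) xa x" if "x \<in> a" for x
      using sep wf[of a] xa that by (auto intro: reach_edge)
    have eb: "reach ?V (?E - F) yb x" if "x \<in> b" for x
      using sep wf[of b] yb that by (auto intro: reach_edge)
    from C[OF \<open>v \<in> ?V\<close>] show "\<exists>e\<in>?E - F. \<forall>x\<in>e. reach ?V (?E - F) v x"
    proof
      assume "reach ?V (?E - F) xa v"
      then show ?thesis using sep ea reach_sym reach_trans by metis
    next
      assume "reach ?V (?E - F) yb v"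
      then show ?thesis using sep eb reach_sym reach_trans by metis
    qed
  qed
  show ?R using mincut nice by blast
next
  let ?V = "gverts G" and ?E = "gedges G"
  let ?LG = "line_graph G"
  have ne: "\<exists>x. x \<in> e" if "e \<in> ?E" for e using wf[OF that] by (auto simp: card_2_iff)
  assume R: ?R
  then have cut: "is_cut G F" and minc: "\<And>F'. F' \<subset> F \<Longrightarrow> \<not> is_cut G F'"
    and nice: "\<forall>v\<in>?V. \<exists>e\<in>?E - F. \<forall>x\<in>e. reach ?V (?E - F) v x"
    by (auto simp: is_min_cut_def)
  have "?V \<noteq> {}" using conn by (simp add: connected_graph_def)
  then obtain x0 y0 where xy0: "x0 \<in> ?V" "y0 \<in> ?V" "\<not> reach ?V (?E - F) x0 y0"
    using cut by (auto simp: is_cut_def conn_pair)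
  obtain a where a: "a \<in> ?E - F" "\<forall>x\<in>a. reach ?V (?E - F) x0 x" using nice xy0 by blast
  obtain b where b: "b \<in> ?E - F" "\<forall>x\<in>b. reach ?V (?E - F) y0 x" using nice xy0 by blast
  have disj: "a \<inter> b = {}"
  proof (rule ccontr)
    assume "a \<inter> b \<noteq> {}"
    then obtain z where "z \<in> a" "z \<in> b" by blast
    then show False using a b xy0 reach_sym reach_trans by metis
  qed
  obtain xa where xa: "xa \<in> a" using ne a by blast
  obtain yb where yb: "yb \<in> b" using ne b by blast
  have nxy: "\<not> reach ?V (?E - F) xa yb"
    using a b xa yb xy0 reach_sym reach_trans by metis
  have "a \<noteq> b" using disj xa by auto
  moreover have "{a, b} \<notin> gedges ?LG"
  proof
    assume "{a, b} \<in> gedges ?LG"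
    then obtain e f where "{a, b} = {e, f}" "e \<inter> f \<noteq> {}"
      by (auto simp: line_graph_def gedges_def)
    then show False using disj by (auto simp: doubleton_eq_iff)
  qed
  moreover have "is_min_ab_separator ?LG a b F"
    unfolding is_min_ab_separator_def
  proof (intro conjI allI impI)
    show "is_ab_separator ?LG a b F"
      unfolding is_ab_separator_def lg_gverts
      using FE a b lg_reach_imp[OF wf, of F a b] xa yb nxy by blast
  next
    fix U' assume "U' \<subset> F"
    then obtain f where f: "f \<in> F" "f \<notin> U'" by blast
    show "\<not> is_ab_separator ?LG a b U'"
    proof
      assume S: "is_ab_separator ?LG a b U'"
      have "F - {f} \<subset> F" using f by auto
      then have "\<not> is_cut G (F - {f})" by (rule minc)
      then have "connected_graph (?V, ?E - (F - {f}))" using FE by (auto simp: is_cut_def)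
      moreover have "xa \<in> ?V" "yb \<in> ?V" using a b xa yb wf[of a] wf[of b] by auto
      ultimately have r1: "reach ?V (?E - (F - {f})) xa yb"
        unfolding conn_pair by blast
      have sub: "?E - (F - {f}) \<subseteq> ?E - U'" using \<open>U' \<subset> F\<close> f by auto
      have r2: "reach ?V (?E - U') xa yb" using reach_mono[OF sub r1] .
      have "a \<in> ?E - U'" "b \<in> ?E - U'" using S by (auto simp: is_ab_separator_def lg_gverts)
      then have "reach (gverts (delete_verts ?LG U')) (gedges (delete_verts ?LG U')) a b"
        using lg_reach_rev[OF wf r2] xa yb by blast
      then show False using S by (simp add: is_ab_separator_def)
    qed
  qed
  ultimately show ?L unfolding is_min_separator_def lg_gverts using a b by blast
qed

theorem lemma2:
  fixes P :: "'a graph set" and F :: "'a set set"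
  assumes "profile P"
    and "connected_graph (display_graph P)"
    and "F \<subseteq> gedges (display_graph P)"
  shows "legal_min_separator P F \<longleftrightarrow> nice_min_cut P F"
proof -
  let ?G = "display_graph P"
  have Tprops: "wf_graph T \<and> gverts T \<noteq> {}" if "T \<in> P" for T
  proof -
    have "phylo_tree T" using assms(1) that unfolding profile_def by blast
    then have "is_tree T" unfolding phylo_tree_def by blast
    then show ?thesis unfolding is_tree_def connected_graph_def by blast
  qed
  have dE: "gedges ?G = (\<Union>T\<in>P. gedges T)" by (simp add: display_graph_def gedges_def)
  have dV: "gverts ?G = (\<Union>T\<in>P. gverts T)" by (simp add: display_graph_def gverts_def)
  have wf: "card e = 2 \<and> e \<subseteq> gverts ?G" if "e \<in> gedges ?G" for e
  proof -
    have "e \<in> (\<Union>T\<in>P. gedges T)" using that unfolding dE .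
    then obtain T where T: "T \<in> P" "e \<in> gedges T" by (rule UN_E)
    have "wf_graph T" using Tprops[OF T(1)] by (rule conjunct1)
    then have "\<forall>e\<in>gedges T. card e = 2 \<and> e \<subseteq> gverts T" unfolding wf_graph_def by blast
    then have "card e = 2" "e \<subseteq> gverts T" using T(2) by auto
    moreover have "gverts T \<subseteq> gverts ?G" unfolding dV using T(1) by (rule UN_upper)
    ultimately show ?thesis by (meson order_trans)
  qed
  have leg: "(\<exists>u. \<forall>e\<in>F \<inter> gedges T. u \<in> e) \<longleftrightarrow> (\<exists>u\<in>gverts T. F \<inter> gedges T \<subseteq> Inc P u)"
    if "T \<in> P" for T
  proof
    assume "\<exists>u. \<forall>e\<in>F \<inter> gedges T. u \<in> e"
    then obtain u where u: "\<forall>e\<in>F \<inter> gedges T. u \<in> e" by blast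
    show "\<exists>u\<in>gverts T. F \<inter> gedges T \<subseteq> Inc P u"
    proof (cases "F \<inter> gedges T = {}")
      case True then show ?thesis using Tprops[OF that] by auto
    next
      case False
      then obtain e where e: "e \<in> F \<inter> gedges T" by blast
      then have "u \<in> gverts T" using u Tprops[OF that] by (auto simp: wf_graph_def)
      moreover have "F \<inter> gedges T \<subseteq> Inc P u" using u assms(3) by (auto simp: Inc_def)
      ultimately show ?thesis by blast
    qed
  next
    assume "\<exists>u\<in>gverts T. F \<inter> gedges T \<subseteq> Inc P u"
    then show "\<exists>u. \<forall>e\<in>F \<inter> gedges T. u \<in> e" by (auto simp: Inc_def)
  qed
  have M: "is_min_separator (line_graph ?G) F \<longleftrightarrow>
    is_min_cut ?G F \<and> (\<forall>v\<in>gverts ?G. \<exists>e\<in>gedges ?G - F. \<forall>x\<in>e. reach (gverts ?G) (gedges ?G - F) v x)"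
    by (rule main_graph[OF wf assms(2) assms(3)])
  have L: "(\<forall>T\<in>P. \<exists>u. \<forall>e\<in>F \<inter> gedges T. u \<in> e) \<longleftrightarrow> (\<forall>T\<in>P. \<exists>u\<in>gverts T. F \<inter> gedges T \<subseteq> Inc P u)"
    using leg by (rule ball_cong[OF refl])
  have C: "is_min_cut ?G F \<Longrightarrow> is_cut ?G F" by (simp add: is_min_cut_def)
  show ?thesis
    unfolding legal_min_separator_def nice_min_cut_def nice_cut_def legal_cut_def Let_def M L
    using C by blast
qed

end
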